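(* Let $T\ge1$ and $\varepsilon>0$, and consider the MDP with states $\{1,2,3,4\}$ defined as follows. State 1 has two actions: one gives reward $\frac12$ and moves deterministically to state 2; the other gives reward $0$ and moves deterministically to state 3. State 2 has a single action giving reward $\frac12$ and moving deterministically to state 1. State 3 has a single action giving reward $\frac12$ and moving to state 3 with probability $1-\frac1T$ and to state 4 with probability $\frac1T$. State 4 has two actions: one gives reward $\frac12+\varepsilon$ and moves to state 4 with probability $1-\frac1T$ and to state 3 with probability $\frac1T$; the other gives reward $0$ and moves deterministically to state 2. Then $\|h^\star\|_{\mathrm{sp}}=\frac{\varepsilon T}2+\varepsilon+\frac12$, but there exists a policy $\pi$ with constant gain such that $\rho^\pi=\rho^\star-\frac\varepsilon2\mathbf 1$ and $\|h^\pi\|_{\mathrm{sp}}=\frac12$.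
   Context: Policies are stationary Markovian. Gain $\rho^\pi(s)=\lim_T\frac1T\mathbb{E}^\pi_s[\sum_{t<T}r(S_t,A_t)]$, $\rho^\star=\sup_\pi\rho^\pi$; bias $h^\pi(s)=\mathrm{C}\text{-}\lim_T\mathbb{E}^\pi_s[\sum_{t<T}(r(S_t,A_t)-\rho^\pi(S_t))]$; $h^\star$ is the bias of a Blackwell-optimal policy. $\|x\|_{\mathrm{sp}}=\max x-\min x$; $\mathbf 1$ is the all-ones vector. *)

theory Defs
  imports "HOL-Analysis.Analysis"
begin

definition is_policy :: "('s \<Rightarrow> 'a set) \<Rightarrow> ('s \<Rightarrow> 'a \<Rightarrow> real) \<Rightarrow> bool" where
  "is_policy A pol \<longleftrightarrow>
     (\<forall>s. (\<forall>a. 0 \<le> pol s a) \<and> (\<forall>a. a \<notin> A s \<longrightarrow> pol s a = 0) \<and> (\<Sum>a\<in>A s. pol s a) = 1)"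

definition P_pol :: "('s \<Rightarrow> 'a set) \<Rightarrow> ('s \<Rightarrow> 'a \<Rightarrow> 's \<Rightarrow> real) \<Rightarrow> ('s \<Rightarrow> 'a \<Rightarrow> real)
    \<Rightarrow> 's \<Rightarrow> 's \<Rightarrow> real" where
  "P_pol A P pol s s' = (\<Sum>a\<in>A s. pol s a * P s a s')"

definition r_pol :: "('s \<Rightarrow> 'a set) \<Rightarrow> ('s \<Rightarrow> 'a \<Rightarrow> real) \<Rightarrow> ('s \<Rightarrow> 'a \<Rightarrow> real) \<Rightarrow> 's \<Rightarrow> real" where
  "r_pol A r pol s = (\<Sum>a\<in>A s. pol s a * r s a)"

text \<open>t-step state distribution: dist t s s' = Pr^pi_s(S_t = s').\<close>
fun dist_pol :: "('s::finite \<Rightarrow> 'a set) \<Rightarrow> ('s \<Rightarrow> 'a \<Rightarrow> 's \<Rightarrow> real) \<Rightarrow> ('s \<Rightarrow> 'a \<Rightarrow> real)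
    \<Rightarrow> nat \<Rightarrow> 's \<Rightarrow> 's \<Rightarrow> real" where
  "dist_pol A P pol 0 s s' = (if s = s' then 1 else 0)"
| "dist_pol A P pol (Suc t) s s' = (\<Sum>s''\<in>UNIV. dist_pol A P pol t s s'' * P_pol A P pol s'' s')"

text \<open>E^pi_s[f(S_t)] (for f = r_pi this is E^pi_s[r(S_t,A_t)]).\<close>
definition expect_at :: "('s::finite \<Rightarrow> 'a set) \<Rightarrow> ('s \<Rightarrow> 'a \<Rightarrow> 's \<Rightarrow> real) \<Rightarrow> ('s \<Rightarrow> 'a \<Rightarrow> real)
    \<Rightarrow> nat \<Rightarrow> ('s \<Rightarrow> real) \<Rightarrow> 's \<Rightarrow> real" where
  "expect_at A P pol t f s = (\<Sum>s'\<in>UNIV. dist_pol A P pol t s s' * f s')"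

definition gain :: "('s::finite \<Rightarrow> 'a set) \<Rightarrow> ('s \<Rightarrow> 'a \<Rightarrow> 's \<Rightarrow> real) \<Rightarrow> ('s \<Rightarrow> 'a \<Rightarrow> real)
    \<Rightarrow> ('s \<Rightarrow> 'a \<Rightarrow> real) \<Rightarrow> 's \<Rightarrow> real" where
  "gain A P r pol s =
     lim (\<lambda>T. (\<Sum>t<T. expect_at A P pol t (r_pol A r pol) s) / real T)"

definition opt_gain :: "('s::finite \<Rightarrow> 'a set) \<Rightarrow> ('s \<Rightarrow> 'a \<Rightarrow> 's \<Rightarrow> real) \<Rightarrow> ('s \<Rightarrow> 'a \<Rightarrow> real)
    \<Rightarrow> 's \<Rightarrow> real" where
  "opt_gain A P r s = (SUP pol\<in>{pol. is_policy A pol}. gain A P r pol s)"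

definition cesaro_lim :: "(nat \<Rightarrow> real) \<Rightarrow> real" where
  "cesaro_lim x = lim (\<lambda>N. (\<Sum>T\<in>{1..N}. x T) / real N)"

definition bias :: "('s::finite \<Rightarrow> 'a set) \<Rightarrow> ('s \<Rightarrow> 'a \<Rightarrow> 's \<Rightarrow> real) \<Rightarrow> ('s \<Rightarrow> 'a \<Rightarrow> real)
    \<Rightarrow> ('s \<Rightarrow> 'a \<Rightarrow> real) \<Rightarrow> 's \<Rightarrow> real" where
  "bias A P r pol s =
     cesaro_lim (\<lambda>T. \<Sum>t<T. expect_at A P pol t
        (\<lambda>s'. r_pol A r pol s' - gain A P r pol s') s)"

definition disc_value :: "('s::finite \<Rightarrow> 'a set) \<Rightarrow> ('s \<Rightarrow> 'a \<Rightarrow> 's \<Rightarrow> real) \<Rightarrow> ('s \<Rightarrow> 'a \<Rightarrow> real)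
    \<Rightarrow> ('s \<Rightarrow> 'a \<Rightarrow> real) \<Rightarrow> real \<Rightarrow> 's \<Rightarrow> real" where
  "disc_value A P r pol \<gamma> s = (\<Sum>t. \<gamma> ^ t * expect_at A P pol t (r_pol A r pol) s)"

definition blackwell_optimal :: "('s::finite \<Rightarrow> 'a set) \<Rightarrow> ('s \<Rightarrow> 'a \<Rightarrow> 's \<Rightarrow> real)
    \<Rightarrow> ('s \<Rightarrow> 'a \<Rightarrow> real) \<Rightarrow> ('s \<Rightarrow> 'a \<Rightarrow> real) \<Rightarrow> bool" where
  "blackwell_optimal A P r pol \<longleftrightarrow> is_policy A pol \<and>
     (\<exists>\<gamma>0<1. \<forall>\<gamma>. \<gamma>0 < \<gamma> \<and> \<gamma> < 1 \<longrightarrow>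
        (\<forall>pol'. is_policy A pol' \<longrightarrow> (\<forall>s. disc_value A P r pol' \<gamma> s \<le> disc_value A P r pol \<gamma> s)))"

definition span :: "('s::finite \<Rightarrow> real) \<Rightarrow> real" where
  "span h = Max (range h) - Min (range h)"

datatype st = S1 | S2 | S3 | S4

lemma UNIV_st: "(UNIV :: st set) = {S1, S2, S3, S4}"
  using st.exhaust by auto

instance st :: finite
  by standard (simp add: UNIV_st)

fun exA :: "st \<Rightarrow> nat set" where
  "exA S1 = {0, 1}"
| "exA S2 = {0}"
| "exA S3 = {0}"
| "exA S4 = {0, 1}"

definition exP :: "real \<Rightarrow> st \<Rightarrow> nat \<Rightarrow> st \<Rightarrow> real" where
  "exP T s a s' =
     (if s = S1 \<and> a = 0 then (if s' = S2 then 1 else 0)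
      else if s = S1 \<and> a = 1 then (if s' = S3 then 1 else 0)
      else if s = S2 \<and> a = 0 then (if s' = S1 then 1 else 0)
      else if s = S3 \<and> a = 0 then (if s' = S3 then 1 - 1 / T else if s' = S4 then 1 / T else 0)
      else if s = S4 \<and> a = 0 then (if s' = S4 then 1 - 1 / T else if s' = S3 then 1 / T else 0)
      else if s = S4 \<and> a = 1 then (if s' = S2 then 1 else 0)
      else 0)"

definition exr :: "real \<Rightarrow> st \<Rightarrow> nat \<Rightarrow> real" where
  "exr \<epsilon> s a =
     (if s = S1 \<and> a = 0 then 1 / 2
      else if s = S1 \<and> a = 1 then 0
      else if s = S2 \<and> a = 0 then 1 / 2
      else if s = S3 \<and> a = 0 then 1 / 2
      else if s = S4 \<and> a = 0 then 1 / 2 + \<epsilon>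
      else 0)"

end

theory Submission
  imports Defs
begin

definition stoch :: "('s::finite \<Rightarrow> 's \<Rightarrow> real) \<Rightarrow> bool" where
  "stoch M \<longleftrightarrow> (\<forall>x y. 0 \<le> M x y) \<and> (\<forall>x. (\<Sum>y\<in>UNIV. M x y) = 1)"

lemma delta_sum: "(\<Sum>x\<in>UNIV. (if s = x then 1 else 0) * (f x::real)) = f (s::'s::finite)"
proof -
  have "(\<Sum>x\<in>UNIV. (if s = x then 1 else 0) * f x) = (\<Sum>x\<in>UNIV. if s = x then f x else 0)"
    by (rule sum.cong) auto
  then show ?thesis by simp
qed

lemma swap_helper:
  fixes a :: "'b::finite \<Rightarrow> real"
  shows "(\<Sum>x\<in>(UNIV::'c::finite set). (\<Sum>y\<in>UNIV. a y * b y x) * c x) = (\<Sum>y\<in>UNIV. a y * (\<Sum>x\<in>UNIV. b y x * c x))"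
proof -
  have "(\<Sum>x\<in>(UNIV::'c set). (\<Sum>y\<in>UNIV. a y * b y x) * c x) = (\<Sum>x\<in>(UNIV::'c set). \<Sum>y\<in>UNIV. a y * (b y x * c x))"
    by (simp add: sum_distrib_right mult.assoc)
  also have "\<dots> = (\<Sum>y\<in>UNIV. \<Sum>x\<in>(UNIV::'c set). a y * (b y x * c x))"
    by (rule sum.swap)
  also have "\<dots> = (\<Sum>y\<in>UNIV. a y * (\<Sum>x\<in>UNIV. b y x * c x))"
    by (simp add: sum_distrib_left)
  finally show ?thesis .
qed

lemma dist_first:
  "dist_pol A P pol (Suc t) s s' = (\<Sum>u\<in>UNIV. P_pol A P pol s u * dist_pol A P pol t u s')"
proof (induction t arbitrary: s')
  case 0
  have "(\<Sum>u\<in>UNIV. P_pol A P pol s u * (if u = s' then 1 else 0)) = (\<Sum>u\<in>UNIV. if u = s' then P_pol A P pol s u else 0)"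
    by (rule sum.cong) auto
  then show ?case by (simp add: delta_sum)
next
  case (Suc t)
  have "dist_pol A P pol (Suc (Suc t)) s s'
      = (\<Sum>s''\<in>UNIV. (\<Sum>u\<in>UNIV. P_pol A P pol s u * dist_pol A P pol t u s'') * P_pol A P pol s'' s')"
    using Suc by simp
  also have "\<dots> = (\<Sum>u\<in>UNIV. P_pol A P pol s u * (\<Sum>s''\<in>UNIV. dist_pol A P pol t u s'' * P_pol A P pol s'' s'))"
    by (rule swap_helper)
  finally show ?case by simp
qed

lemma expect_0: "expect_at A P pol 0 f s = f s"
  by (simp add: expect_at_def delta_sum)

lemma expect_Suc:
  "expect_at A P pol (Suc t) f s = expect_at A P pol t (\<lambda>x. \<Sum>y\<in>UNIV. P_pol A P pol x y * f y) s"
  unfolding expect_at_def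
  by (simp add: swap_helper)

lemma expect_Suc2:
  "expect_at A P pol (Suc t) f s = (\<Sum>y\<in>UNIV. P_pol A P pol s y * expect_at A P pol t f y)"
  unfolding expect_at_def dist_first
  by (rule swap_helper)

lemma expect_add: "expect_at A P pol t (\<lambda>x. f x + g x) s = expect_at A P pol t f s + expect_at A P pol t g s"
  unfolding expect_at_def by (simp add: distrib_left sum.distrib)

lemma expect_diff: "expect_at A P pol t (\<lambda>x. f x - g x) s = expect_at A P pol t f s - expect_at A P pol t g s"
  unfolding expect_at_def by (simp add: right_diff_distrib sum_subtractf)

lemma dist_props:
  assumes "stoch (P_pol A P pol)"
  shows "(\<forall>s'. 0 \<le> dist_pol A P pol t s s') \<and> (\<Sum>s'\<in>UNIV. dist_pol A P pol t s s') = 1"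
proof (induction t)
  case 0
  then show ?case by simp
next
  case (Suc t)
  have nn: "\<forall>s'. 0 \<le> dist_pol A P pol (Suc t) s s'"
    using Suc assms unfolding stoch_def by (auto intro!: sum_nonneg)
  have "(\<Sum>s'\<in>UNIV. dist_pol A P pol (Suc t) s s')
      = (\<Sum>s''\<in>UNIV. dist_pol A P pol t s s'' * (\<Sum>s'\<in>UNIV. P_pol A P pol s'' s'))"
    using swap_helper[where a="dist_pol A P pol t s" and b="P_pol A P pol" and c="\<lambda>_. 1"] by simp
  also have "\<dots> = 1" using Suc assms unfolding stoch_def by simp
  finally show ?case using nn by simp
qed

lemma expect_const:
  assumes "stoch (P_pol A P pol)"
  shows "expect_at A P pol t (\<lambda>x. c) s = c"
  using dist_props[OF assms, of t s] unfolding expect_at_def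
  by (simp add: sum_distrib_right[symmetric])

lemma expect_mono:
  assumes "stoch (P_pol A P pol)" "\<And>x. f x \<le> g x"
  shows "expect_at A P pol t f s \<le> expect_at A P pol t g s"
  using dist_props[OF assms(1), of t s] assms(2) unfolding expect_at_def
  by (auto intro!: sum_mono mult_left_mono)

lemma expect_bound:
  assumes "stoch (P_pol A P pol)" "\<And>x. \<bar>f x\<bar> \<le> B"
  shows "\<bar>expect_at A P pol t f s\<bar> \<le> B"
proof -
  have "expect_at A P pol t f s \<le> expect_at A P pol t (\<lambda>x. B) s"
    using assms by (intro expect_mono) (auto simp: abs_le_iff)
  moreover have "expect_at A P pol t (\<lambda>x. - B) s \<le> expect_at A P pol t f s"
    by (intro expect_mono[OF assms(1)]) (meson abs_le_D2 assms(2) minus_le_iff)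
  ultimately show ?thesis using expect_const[OF assms(1)] by (simp add: abs_le_iff)
qed

lemma abs_le_sum_abs: "\<bar>f (x::'s::finite)\<bar> \<le> (\<Sum>y\<in>UNIV. \<bar>f y\<bar>::real)"
  by (rule member_le_sum) auto

lemma expect_bound_sum:
  assumes "stoch (P_pol A P pol)"
  shows "\<bar>expect_at A P pol t f s\<bar> \<le> (\<Sum>y\<in>UNIV. \<bar>f y\<bar>)"
  by (rule expect_bound[OF assms]) (rule abs_le_sum_abs)

lemma expect_inv:
  assumes "\<And>x. (\<Sum>y\<in>UNIV. P_pol A P pol x y * g y) = g x"
  shows "expect_at A P pol t g s = g s"
proof (induction t arbitrary: s)
  case 0 then show ?case by (simp add: expect_0)
next
  case (Suc t)
  have "(\<lambda>x. \<Sum>y\<in>UNIV. P_pol A P pol x y * g y) = g" using assms by auto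
  then show ?case using Suc by (simp add: expect_Suc)
qed

lemma poisson_sum:
  assumes "\<And>x. (\<Sum>y\<in>UNIV. P_pol A P pol x y * g y) = g x"
    and "\<And>x. g x + h x = R x + (\<Sum>y\<in>UNIV. P_pol A P pol x y * h y)"
  shows "(\<Sum>t<N. expect_at A P pol t R s) = real N * g s + h s - expect_at A P pol N h s"
proof (induction N)
  case 0 then show ?case by (simp add: expect_0)
next
  case (Suc N)
  have "R = (\<lambda>x. (g x + h x) - (\<Sum>y\<in>UNIV. P_pol A P pol x y * h y))"
    using assms(2) by (auto simp: algebra_simps)
  then have "expect_at A P pol N R s = g s + expect_at A P pol N h s - expect_at A P pol (Suc N) h s"
    by (simp add: expect_diff expect_add expect_inv[OF assms(1)] expect_Suc)
  then show ?case using Suc by (simp add: algebra_simps)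
qed

lemma bounded_over_n:
  assumes "\<And>n. \<bar>c n\<bar> \<le> (B::real)"
  shows "(\<lambda>n. c n / real n) \<longlonglongrightarrow> 0"
proof (rule Lim_null_comparison)
  show "\<forall>\<^sub>F n in sequentially. norm (c n / real n) \<le> B / real n"
    using assms by (intro always_eventually allI) (simp add: abs_divide divide_right_mono)
  show "(\<lambda>n. B / real n) \<longlonglongrightarrow> 0" by (rule lim_const_over_n)
qed

lemma gain_poisson:
  assumes st: "stoch (P_pol A P pol)"
    and inv: "\<And>x. (\<Sum>y\<in>UNIV. P_pol A P pol x y * g y) = g x"
    and po: "\<And>x. g x + h x = r_pol A r pol x + (\<Sum>y\<in>UNIV. P_pol A P pol x y * h y)"
  shows "gain A P r pol s = g s"
proof -
  let ?B = "\<bar>h s\<bar> + (\<Sum>y\<in>UNIV. \<bar>h y\<bar>)"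
  have bd: "\<bar>h s - expect_at A P pol n h s\<bar> \<le> ?B" for n
    using expect_bound_sum[OF st, where t=n and s=s and f=h] by linarith
  have "(\<lambda>n. g s + (h s - expect_at A P pol n h s) / real n) \<longlonglongrightarrow> g s + 0"
    by (intro tendsto_add tendsto_const bounded_over_n[OF bd])
  moreover have "\<forall>\<^sub>F n in sequentially. g s + (h s - expect_at A P pol n h s) / real n
      = (\<Sum>t<n. expect_at A P pol t (r_pol A r pol) s) / real n"
    using eventually_ge_at_top[of 1]
    by eventually_elim (simp add: poisson_sum[OF inv po] field_simps)
  ultimately have "(\<lambda>n. (\<Sum>t<n. expect_at A P pol t (r_pol A r pol) s) / real n) \<longlonglongrightarrow> g s"
    using tendsto_cong by force
  then show ?thesis unfolding gain_def by (rule limI)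
qed



lemma bias_poisson:
  assumes st: "stoch (P_pol A P pol)"
    and inv: "\<And>x. (\<Sum>y\<in>UNIV. P_pol A P pol x y * g y) = g x"
    and po: "\<And>x. g x + h x = r_pol A r pol x + (\<Sum>y\<in>UNIV. P_pol A P pol x y * h y)"
    and hk: "\<And>x. h x = k x - (\<Sum>y\<in>UNIV. P_pol A P pol x y * k y)"
  shows "bias A P r pol s = h s"
proof -
  have gn: "gain A P r pol x = g x" for x by (rule gain_poisson[OF st inv po])
  have xT: "(\<Sum>t<n. expect_at A P pol t (\<lambda>s'. r_pol A r pol s' - gain A P r pol s') s)
      = h s - expect_at A P pol n h s" for n
    using poisson_sum[where A=A and P=P and pol=pol and g="\<lambda>_. 0" and h=h and R="\<lambda>s'. r_pol A r pol s' - gain A P r pol s'" and N=n and s=s] po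
    by (simp add: gn algebra_simps)
  have Eh: "expect_at A P pol n h s = expect_at A P pol n k s - expect_at A P pol (Suc n) k s" for n
  proof -
    have "h = (\<lambda>x. k x - (\<Sum>y\<in>UNIV. P_pol A P pol x y * k y))" using hk by auto
    then show ?thesis by (simp add: expect_diff expect_Suc)
  qed
  have sumT: "(\<Sum>T\<in>{1..n}. h s - expect_at A P pol T h s)
     = real n * h s - (expect_at A P pol 1 k s - expect_at A P pol (Suc n) k s)" for n
  proof (induction n)
    case 0 then show ?case by simp
  next
    case (Suc n)
    have "{1..Suc n} = insert (Suc n) {1..n}" by auto
    then have "(\<Sum>T\<in>{1..Suc n}. h s - expect_at A P pol T h s)
       = (h s - expect_at A P pol (Suc n) h s) + (\<Sum>T\<in>{1..n}. h s - expect_at A P pol T h s)"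
      by simp
    then show ?case using Suc by (simp add: Eh[of "Suc n"] algebra_simps)
  qed
  let ?B = "\<bar>expect_at A P pol 1 k s\<bar> + (\<Sum>y\<in>UNIV. \<bar>k y\<bar>)"
  have bd: "\<bar>expect_at A P pol 1 k s - expect_at A P pol (Suc n) k s\<bar> \<le> ?B" for n
    using expect_bound_sum[OF st, where t="Suc n" and s=s and f=k] by linarith
  have "(\<lambda>n. h s - (expect_at A P pol 1 k s - expect_at A P pol (Suc n) k s) / real n) \<longlonglongrightarrow> h s - 0"
    by (intro tendsto_diff tendsto_const bounded_over_n[OF bd])
  moreover have "\<forall>\<^sub>F n in sequentially. h s - (expect_at A P pol 1 k s - expect_at A P pol (Suc n) k s) / real n
      = (\<Sum>T\<in>{1..n}. \<Sum>t<T. expect_at A P pol t (\<lambda>s'. r_pol A r pol s' - gain A P r pol s') s) / real n"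
    using eventually_ge_at_top[of 1]
    by eventually_elim (simp only: xT sumT, simp add: field_simps)
  ultimately have "(\<lambda>n. (\<Sum>T\<in>{1..n}. \<Sum>t<T. expect_at A P pol t (\<lambda>s'. r_pol A r pol s' - gain A P r pol s') s) / real n) \<longlonglongrightarrow> h s"
    using tendsto_cong by force
  then show ?thesis unfolding bias_def cesaro_lim_def by (rule limI)
qed



lemma gain_le:
  assumes st: "stoch (P_pol A P pol)"
    and inv: "\<And>x. (\<Sum>y\<in>UNIV. P_pol A P pol x y * g y) = g x"
    and po: "\<And>x. g x + h x = r_pol A r pol x + (\<Sum>y\<in>UNIV. P_pol A P pol x y * h y)"
    and HH: "\<And>x. r_pol A r pol x + (\<Sum>y\<in>UNIV. P_pol A P pol x y * H y) \<le> c + H x"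
  shows "g s \<le> c"
proof (rule ccontr)
  assume "\<not> g s \<le> c"
  then have pos: "0 < g s - c" by simp
  have up: "(\<Sum>t<n. expect_at A P pol t (r_pol A r pol) s) \<le> real n * c + H s - expect_at A P pol n H s" for n
  proof (induction n)
    case 0 then show ?case by (simp add: expect_0)
  next
    case (Suc n)
    have "expect_at A P pol n (r_pol A r pol) s
       \<le> expect_at A P pol n (\<lambda>x. (c + H x) - (\<Sum>y\<in>UNIV. P_pol A P pol x y * H y)) s"
      using HH by (intro expect_mono[OF st]) (auto simp: algebra_simps)
    also have "\<dots> = c + expect_at A P pol n H s - expect_at A P pol (Suc n) H s"
      by (simp add: expect_diff expect_add expect_const[OF st] expect_Suc)
    finally show ?case using Suc by (simp add: algebra_simps)
  qed
  let ?K = "2 * (\<Sum>y\<in>UNIV. \<bar>h y\<bar>) + 2 * (\<Sum>y\<in>UNIV. \<bar>H y\<bar>)"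
  obtain n where n: "?K < real n * (g s - c)" using ex_less_of_nat_mult[OF pos] by auto
  have "real n * g s + h s - expect_at A P pol n h s \<le> real n * c + H s - expect_at A P pol n H s"
    using up[of n] poisson_sum[OF inv po, where N=n and s=s] by simp
  moreover have "\<bar>expect_at A P pol n h s\<bar> \<le> (\<Sum>y\<in>UNIV. \<bar>h y\<bar>)"
    by (rule expect_bound_sum[OF st])
  moreover have "\<bar>expect_at A P pol n H s\<bar> \<le> (\<Sum>y\<in>UNIV. \<bar>H y\<bar>)"
    by (rule expect_bound_sum[OF st])
  moreover have "\<bar>h s\<bar> \<le> (\<Sum>y\<in>UNIV. \<bar>h y\<bar>)" by (rule abs_le_sum_abs)
  moreover have "\<bar>H s\<bar> \<le> (\<Sum>y\<in>UNIV. \<bar>H y\<bar>)" by (rule abs_le_sum_abs)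
  ultimately show False using n by (simp add: algebra_simps)
qed



lemma disc_eq:
  assumes st: "stoch (P_pol A P pol)" and g0: "0 \<le> \<gamma>" and g1: "\<gamma> < 1"
  shows "disc_value A P r pol \<gamma> s
     = r_pol A r pol s + \<gamma> * (\<Sum>y\<in>UNIV. P_pol A P pol s y * disc_value A P r pol \<gamma> y)"
proof -
  define e where "e t y = \<gamma> ^ t * expect_at A P pol t (r_pol A r pol) y" for t y
  let ?B = "(\<Sum>y\<in>UNIV. \<bar>r_pol A r pol y\<bar>)"
  have summ: "summable (\<lambda>t. e t y)" for y
  proof -
    have "summable (\<lambda>t. ?B * \<gamma> ^ t)"
      using g0 g1 by (intro summable_mult summable_geometric) simp
    moreover have "norm (e t y) \<le> ?B * \<gamma> ^ t" for t
    proof -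
      have "\<bar>expect_at A P pol t (r_pol A r pol) y\<bar> \<le> ?B"
        by (rule expect_bound_sum[OF st])
      then show ?thesis unfolding e_def using g0
        by (simp add: abs_mult mult.commute mult_left_mono)
    qed
    ultimately show ?thesis
      by (intro summable_comparison_test[where f="\<lambda>t. e t y" and g="\<lambda>t. ?B * \<gamma> ^ t"]) auto
  qed
  have dv: "disc_value A P r pol \<gamma> y = (\<Sum>t. e t y)" for y
    unfolding disc_value_def e_def ..
  have es: "e (Suc n) s = \<gamma> * (\<Sum>y\<in>UNIV. P_pol A P pol s y * e n y)" for n
    unfolding e_def by (simp add: expect_Suc2 sum_distrib_left mult_ac)
  have "(\<Sum>n. e (Suc n) s) = (\<Sum>t. e t s) - e 0 s"
    by (rule suminf_split_head[OF summ])
  moreover have "(\<Sum>n. e (Suc n) s) = \<gamma> * (\<Sum>y\<in>UNIV. P_pol A P pol s y * (\<Sum>t. e t y))"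
  proof -
    have "(\<Sum>n. e (Suc n) s) = (\<Sum>n. \<gamma> * (\<Sum>y\<in>UNIV. P_pol A P pol s y * e n y))"
      by (simp add: es)
    also have "\<dots> = \<gamma> * (\<Sum>n. \<Sum>y\<in>UNIV. P_pol A P pol s y * e n y)"
      by (intro suminf_mult summable_sum summable_mult summ)
    also have "(\<Sum>n. \<Sum>y\<in>UNIV. P_pol A P pol s y * e n y) = (\<Sum>y\<in>UNIV. \<Sum>n. P_pol A P pol s y * e n y)"
      by (intro suminf_sum summable_mult summ)
    also have "\<dots> = (\<Sum>y\<in>UNIV. P_pol A P pol s y * (\<Sum>t. e t y))"
      by (intro sum.cong refl suminf_mult summ)
    finally show ?thesis .
  qed
  moreover have "e 0 s = r_pol A r pol s" by (simp add: e_def expect_0)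
  ultimately show ?thesis by (simp add: dv)
qed


lemma disc_compare:
  fixes M :: "'s::finite \<Rightarrow> 's \<Rightarrow> real"
  assumes st: "stoch M" and g0: "0 \<le> \<gamma>" and g1: "\<gamma> < 1"
    and X: "\<And>x. R x + \<gamma> * (\<Sum>y\<in>UNIV. M x y * X y) \<le> X x"
    and Y: "\<And>x. Y x \<le> R x + \<gamma> * (\<Sum>y\<in>UNIV. M x y * Y y)"
  shows "Y s \<le> X s"
proof -
  define D where "D x = X x - Y x" for x
  have DD: "\<gamma> * (\<Sum>y\<in>UNIV. M x y * D y) \<le> D x" for x
    using X[of x] Y[of x] unfolding D_def
    by (simp add: right_diff_distrib sum_subtractf algebra_simps)
  define m where "m = Min (range D)"
  have mle: "m \<le> D y" for y unfolding m_def by (rule Min_le) auto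
  have "m \<in> range D" unfolding m_def by (rule Min_in) auto
  then obtain x0 where x0: "D x0 = m" by auto
  have "(\<Sum>y\<in>UNIV. M x0 y * m) \<le> (\<Sum>y\<in>UNIV. M x0 y * D y)"
    using st mle unfolding stoch_def by (intro sum_mono mult_left_mono) auto
  moreover have "(\<Sum>y\<in>UNIV. M x0 y * m) = m"
    using st unfolding stoch_def by (simp add: sum_distrib_right[symmetric])
  ultimately have "\<gamma> * m \<le> \<gamma> * (\<Sum>y\<in>UNIV. M x0 y * D y)"
    using g0 by (simp add: mult_left_mono)
  then have "\<gamma> * m \<le> m" using DD[of x0] x0 by linarith
  then have "0 \<le> (1 - \<gamma>) * m" by (simp add: algebra_simps)
  then have "0 \<le> m" using g1 by (simp add: zero_le_mult_iff)
  then show ?thesis using mle[of s] unfolding D_def by simp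
qed





lemma pol_facts:
  assumes "is_policy exA pol"
  shows "pol S1 1 = 1 - pol S1 0" "pol S2 0 = 1" "pol S3 0 = 1" "pol S4 1 = 1 - pol S4 0"
    "0 \<le> pol S1 0" "pol S1 0 \<le> 1" "0 \<le> pol S4 0" "pol S4 0 \<le> 1"
proof -
  have a: "\<And>s a. 0 \<le> pol s a" and b: "\<And>s. (\<Sum>a\<in>exA s. pol s a) = 1"
    using assms unfolding is_policy_def by auto
  have 1: "pol S1 0 + pol S1 1 = 1" using b[of S1] by simp
  have 4: "pol S4 0 + pol S4 1 = 1" using b[of S4] by simp
  show "pol S1 1 = 1 - pol S1 0" "pol S4 1 = 1 - pol S4 0" using 1 4 by auto
  show "pol S2 0 = 1" using b[of S2] by simp
  show "pol S3 0 = 1" using b[of S3] by simp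
  show "0 \<le> pol S1 0" "pol S1 0 \<le> 1" "0 \<le> pol S4 0" "pol S4 0 \<le> 1"
    using 1 4 a[of S1 0] a[of S1 1] a[of S4 0] a[of S4 1] by auto
qed

lemma MS1: "(\<Sum>y\<in>UNIV. P_pol exA (exP T) pol S1 y * f y) = pol S1 0 * f S2 + pol S1 1 * f S3"
  by (simp add: P_pol_def exP_def UNIV_st algebra_simps)
lemma MS2: "(\<Sum>y\<in>UNIV. P_pol exA (exP T) pol S2 y * f y) = pol S2 0 * f S1"
  by (simp add: P_pol_def exP_def UNIV_st algebra_simps)
lemma MS3: "(\<Sum>y\<in>UNIV. P_pol exA (exP T) pol S3 y * f y) = pol S3 0 * ((1 - 1/T) * f S3 + (1/T) * f S4)"
  by (simp add: P_pol_def exP_def UNIV_st algebra_simps)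
lemma MS4: "(\<Sum>y\<in>UNIV. P_pol exA (exP T) pol S4 y * f y)
   = pol S4 0 * ((1 - 1/T) * f S4 + (1/T) * f S3) + pol S4 1 * f S2"
  by (simp add: P_pol_def exP_def UNIV_st algebra_simps)

lemma RS1: "r_pol exA (exr e) pol S1 = pol S1 0 / 2"
  by (simp add: r_pol_def exr_def)
lemma RS2: "r_pol exA (exr e) pol S2 = pol S2 0 / 2"
  by (simp add: r_pol_def exr_def)
lemma RS3: "r_pol exA (exr e) pol S3 = pol S3 0 / 2"
  by (simp add: r_pol_def exr_def)
lemma RS4: "r_pol exA (exr e) pol S4 = pol S4 0 * (1/2 + e)"
  by (simp add: r_pol_def exr_def)

lemma stoch_ex:
  assumes "is_policy exA pol" "T \<ge> 1"
  shows "stoch (P_pol exA (exP T) pol)"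
proof -
  have a: "\<And>s a. 0 \<le> pol s a" using assms unfolding is_policy_def by auto
  have T: "1/T \<le> 1" "0 \<le> 1/T" using assms(2) by auto
  have nn: "0 \<le> exP T s a s'" for s a s' using T unfolding exP_def by auto
  have "0 \<le> P_pol exA (exP T) pol x y" for x y
    unfolding P_pol_def using a nn by (intro sum_nonneg mult_nonneg_nonneg) auto
  moreover have "(\<Sum>y\<in>UNIV. P_pol exA (exP T) pol x y) = 1" for x
  proof -
    have "(\<Sum>y\<in>UNIV. P_pol exA (exP T) pol x y) = (\<Sum>y\<in>UNIV. P_pol exA (exP T) pol x y * 1)" by simp
    also have "\<dots> = 1"
      using pol_facts[OF assms(1)] by (cases x) (simp_all only: MS1 MS2 MS3 MS4, simp_all add: algebra_simps)
    finally show ?thesis .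
  qed
  ultimately show ?thesis unfolding stoch_def by auto
qed

lemma MS1p: "is_policy exA pol \<Longrightarrow> (\<Sum>y\<in>UNIV. P_pol exA (exP T) pol S1 y * f y) = pol S1 0 * f S2 + (1 - pol S1 0) * f S3"
  using MS1[of T pol f] pol_facts(1)[of pol] by simp
lemma MS2p: "is_policy exA pol \<Longrightarrow> (\<Sum>y\<in>UNIV. P_pol exA (exP T) pol S2 y * f y) = f S1"
  using MS2[of T pol f] pol_facts(2)[of pol] by simp
lemma MS3p: "is_policy exA pol \<Longrightarrow> (\<Sum>y\<in>UNIV. P_pol exA (exP T) pol S3 y * f y) = (1 - 1/T) * f S3 + (1/T) * f S4"
  using MS3[of T pol f] pol_facts(3)[of pol] by simp
lemma MS4p: "is_policy exA pol \<Longrightarrow> (\<Sum>y\<in>UNIV. P_pol exA (exP T) pol S4 y * f y)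
   = pol S4 0 * ((1 - 1/T) * f S4 + (1/T) * f S3) + (1 - pol S4 0) * f S2"
  using MS4[of T pol f] pol_facts(4)[of pol] by simp
lemma RS2p: "is_policy exA pol \<Longrightarrow> r_pol exA (exr e) pol S2 = 1/2"
  using RS2[of e pol] pol_facts(2)[of pol] by simp
lemma RS3p: "is_policy exA pol \<Longrightarrow> r_pol exA (exr e) pol S3 = 1/2"
  using RS3[of e pol] pol_facts(3)[of pol] by simp

definition pstar :: "st \<Rightarrow> nat \<Rightarrow> real" where
  "pstar s a = (if s = S1 then (if a = 1 then 1 else 0) else if a = 0 then 1 else 0)"
definition pzero :: "st \<Rightarrow> nat \<Rightarrow> real" where
  "pzero s a = (if s = S4 then (if a = 1 then 1 else 0) else if a = 0 then 1 else 0)"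

lemma pstar_pol: "is_policy exA pstar"
  unfolding is_policy_def
proof
  fix s show "(\<forall>a. 0 \<le> pstar s a) \<and> (\<forall>a. a \<notin> exA s \<longrightarrow> pstar s a = 0) \<and> (\<Sum>a\<in>exA s. pstar s a) = 1"
    by (cases s) (auto simp: pstar_def)
qed

lemma pzero_pol: "is_policy exA pzero"
  unfolding is_policy_def
proof
  fix s show "(\<forall>a. 0 \<le> pzero s a) \<and> (\<forall>a. a \<notin> exA s \<longrightarrow> pzero s a = 0) \<and> (\<Sum>a\<in>exA s. pzero s a) = 1"
    by (cases s) (auto simp: pzero_def)
qed

lemma span_eq:
  fixes h :: "'s::finite \<Rightarrow> real"
  assumes "\<And>x. h x \<le> h a" "\<And>x. h b \<le> h x"
  shows "span h = h a - h b"
proof -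
  have "Max (range h) = h a" by (rule Max_eqI) (use assms in auto)
  moreover have "Min (range h) = h b" by (rule Min_eqI) (use assms in auto)
  ultimately show ?thesis unfolding span_def by simp
qed


lemma const_inv:
  assumes "stoch M"
  shows "(\<Sum>y\<in>UNIV. M x y * c) = (c::real)"
  using assms unfolding stoch_def by (simp add: sum_distrib_right[symmetric])

definition hstar :: "real \<Rightarrow> real \<Rightarrow> st \<Rightarrow> real" where
  "hstar T e s = (case s of S1 \<Rightarrow> -1/2 - e/2 - e*T/4 | S2 \<Rightarrow> -1/2 - e - e*T/4
      | S3 \<Rightarrow> - e*T/4 | S4 \<Rightarrow> e*T/4)"
definition kstar :: "real \<Rightarrow> real \<Rightarrow> st \<Rightarrow> real" where
  "kstar T e s = (case s of S1 \<Rightarrow> -1/2 - e/2 - e*T/4 | S2 \<Rightarrow> -1 - 3*e/2 - e*T/2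
      | S3 \<Rightarrow> 0 | S4 \<Rightarrow> e*T^2/4)"
definition hzero :: "st \<Rightarrow> real" where
  "hzero s = (case s of S1 \<Rightarrow> 0 | S2 \<Rightarrow> 0 | S3 \<Rightarrow> -1/2 | S4 \<Rightarrow> -1/2)"
definition kzero :: "real \<Rightarrow> st \<Rightarrow> real" where
  "kzero T s = (case s of S1 \<Rightarrow> 0 | S2 \<Rightarrow> 0 | S3 \<Rightarrow> -1/2 - T/2 | S4 \<Rightarrow> -1/2)"

context
  fixes T e :: real
  assumes T1: "T \<ge> 1" and e0: "e > 0"
begin

lemma Tnz: "T \<noteq> 0" using T1 by auto
lemma Tpos: "0 < T" using T1 by auto

lemma pstar_po: "(1/2 + e/2) + hstar T e x
   = r_pol exA (exr e) pstar x + (\<Sum>y\<in>UNIV. P_pol exA (exP T) pstar x y * hstar T e y)"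
  using Tnz by (cases x) (simp_all only: MS1 MS2 MS3 MS4 RS1 RS2 RS3 RS4, simp_all add: pstar_def hstar_def field_simps)

lemma pstar_k: "hstar T e x = kstar T e x - (\<Sum>y\<in>UNIV. P_pol exA (exP T) pstar x y * kstar T e y)"
  using Tnz by (cases x) (simp_all only: MS1 MS2 MS3 MS4, simp_all add: pstar_def hstar_def kstar_def field_simps power2_eq_square)

lemma pzero_po: "1/2 + hzero x
   = r_pol exA (exr e) pzero x + (\<Sum>y\<in>UNIV. P_pol exA (exP T) pzero x y * hzero y)"
  using Tnz by (cases x) (simp_all only: MS1 MS2 MS3 MS4 RS1 RS2 RS3 RS4, simp_all add: pzero_def hzero_def field_simps)

lemma pzero_k: "hzero x = kzero T x - (\<Sum>y\<in>UNIV. P_pol exA (exP T) pzero x y * kzero T y)"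
  using Tnz by (cases x) (simp_all only: MS1 MS2 MS3 MS4, simp_all add: pzero_def hzero_def kzero_def field_simps)

lemma st_star: "stoch (P_pol exA (exP T) pstar)" by (rule stoch_ex[OF pstar_pol T1])
lemma st_zero: "stoch (P_pol exA (exP T) pzero)" by (rule stoch_ex[OF pzero_pol T1])

lemma gain_pstar: "gain exA (exP T) (exr e) pstar s = 1/2 + e/2"
  by (rule gain_poisson[OF st_star const_inv[OF st_star] pstar_po])

lemma bias_pstar: "bias exA (exP T) (exr e) pstar s = hstar T e s"
  by (rule bias_poisson[OF st_star const_inv[OF st_star] pstar_po pstar_k])

lemma gain_pzero: "gain exA (exP T) (exr e) pzero s = 1/2"
  by (rule gain_poisson[OF st_zero const_inv[OF st_zero] pzero_po])

lemma bias_pzero: "bias exA (exP T) (exr e) pzero s = hzero s"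
  by (rule bias_poisson[OF st_zero const_inv[OF st_zero] pzero_po pzero_k])

lemma span_hstar: "span (hstar T e) = e * T / 2 + e + 1/2"
proof -
  have "span (hstar T e) = hstar T e S4 - hstar T e S2"
  proof (rule span_eq)
    fix x
    have "0 \<le> e * T" "0 \<le> T * e" using e0 T1 by simp_all
    then show "hstar T e x \<le> hstar T e S4" using e0 by (cases x) (auto simp: hstar_def)
    show "hstar T e S2 \<le> hstar T e x" using e0 \<open>0 \<le> e * T\<close> \<open>0 \<le> T * e\<close> by (cases x) (auto simp: hstar_def)
  qed
  then show ?thesis by (simp add: hstar_def)
qed

lemma span_hzero: "span hzero = 1/2"
proof -
  have "span hzero = hzero S1 - hzero S3"
  proof (rule span_eq)
    fix x show "hzero x \<le> hzero S1" by (cases x) (auto simp: hzero_def)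
    show "hzero S3 \<le> hzero x" by (cases x) (auto simp: hzero_def)
  qed
  then show ?thesis by (simp add: hzero_def)
qed


lemma HH_star:
  assumes pol: "is_policy exA pol"
  shows "r_pol exA (exr e) pol x + (\<Sum>y\<in>UNIV. P_pol exA (exP T) pol x y * hstar T e y)
     \<le> (1/2 + e/2) + hstar T e x"
proof -
  note pf = pol_facts[OF pol]
  note ms = MS1p[OF pol] MS2p[OF pol] MS3p[OF pol] MS4p[OF pol] RS1 RS2p[OF pol] RS3p[OF pol] RS4
  define p where "p = pol S1 0"
  define q where "q = pol S4 0"
  have p: "0 \<le> p" "p \<le> 1" and q: "0 \<le> q" "q \<le> 1" using pf by (auto simp: p_def q_def)
  have pe: "0 \<le> p * e" using p e0 by simp
  have qe: "0 \<le> (1 - q) * (1 + 3 * e / 2 + e * T / 2)"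
    using q e0 T1 by (intro mult_nonneg_nonneg) auto
  show ?thesis
  proof (cases x)
    case S1
    have "r_pol exA (exr e) pol x + (\<Sum>y\<in>UNIV. P_pol exA (exP T) pol x y * hstar T e y)
        = (1/2 + e/2) + hstar T e x - p * e"
      unfolding S1 ms by (simp add: p_def hstar_def algebra_simps)
    then show ?thesis using pe by linarith
  next
    case S2
    then show ?thesis unfolding S2 ms by (simp add: hstar_def algebra_simps)
  next
    case S3
    then show ?thesis unfolding S3 ms using Tpos by (simp add: hstar_def field_simps)
  next
    case S4
    have "r_pol exA (exr e) pol x + (\<Sum>y\<in>UNIV. P_pol exA (exP T) pol x y * hstar T e y)
        = (1/2 + e/2) + hstar T e x - (1 - q) * (1 + 3 * e / 2 + e * T / 2)"
      unfolding S4 ms using Tnz by (simp add: q_def hstar_def field_simps)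
    then show ?thesis using qe by linarith
  qed
qed

lemma poisson_exists:
  assumes pol: "is_policy exA pol"
  shows "\<exists>g h. (\<forall>x. (\<Sum>y\<in>UNIV. P_pol exA (exP T) pol x y * g y) = g x)
     \<and> (\<forall>x. g x + h x = r_pol exA (exr e) pol x + (\<Sum>y\<in>UNIV. P_pol exA (exP T) pol x y * h y))"
proof -
  note pf = pol_facts[OF pol]
  note ms = MS1p[OF pol] MS2p[OF pol] MS3p[OF pol] MS4p[OF pol] RS1 RS2p[OF pol] RS3p[OF pol] RS4
  define p where "p = pol S1 0"
  define q where "q = pol S4 0"
  have p: "0 \<le> p" "p \<le> 1" and q: "0 \<le> q" "q \<le> 1" using pf by (auto simp: p_def q_def)
  have st: "stoch (P_pol exA (exP T) pol)" by (rule stoch_ex[OF pol T1])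
  consider "q = 1" "p = 1" | "q = 1" "p \<noteq> 1" | "q \<noteq> 1" by blast
  then show ?thesis
  proof cases
    case 1
    define g where "g s = (case s of S1 \<Rightarrow> 1/2 | S2 \<Rightarrow> 1/2 | S3 \<Rightarrow> 1/2 + e/2 | S4 \<Rightarrow> (1/2 + e/2::real))" for s
    define h where "h s = (case s of S1 \<Rightarrow> 0 | S2 \<Rightarrow> 0 | S3 \<Rightarrow> - e*T/4 | S4 \<Rightarrow> (e*T/4::real))" for s
    have pq: "pol S1 0 = 1" "pol S4 0 = 1" using 1 by (auto simp: p_def q_def)
    have "(\<Sum>y\<in>UNIV. P_pol exA (exP T) pol x y * g y) = g x" for x
      using Tnz by (cases x) (simp_all only: ms pq, simp_all add: g_def field_simps)
    moreover have "g x + h x = r_pol exA (exr e) pol x + (\<Sum>y\<in>UNIV. P_pol exA (exP T) pol x y * h y)" for x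
      using Tnz by (cases x) (simp_all only: ms pq, simp_all add: g_def h_def field_simps)
    ultimately show ?thesis by blast
  next
    case 2
    have p1: "1 - p \<noteq> 0" using 2 by simp
    have pq: "pol S4 0 = 1" using 2 by (auto simp: q_def)
    define h3 where "h3 = - e*T/4"
    define h1 where "h1 = h3 - 1/2 - e * (1 + p) / (2 * (1 - p))"
    define h where "h s = (case s of S1 \<Rightarrow> h1 | S2 \<Rightarrow> h1 - e/2 | S3 \<Rightarrow> h3 | S4 \<Rightarrow> (e*T/4::real))" for s
    have "(\<Sum>y\<in>UNIV. P_pol exA (exP T) pol x y * (1/2 + e/2)) = 1/2 + e/2" for x
      by (rule const_inv[OF st])
    moreover have "(1/2 + e/2) + h x = r_pol exA (exr e) pol x + (\<Sum>y\<in>UNIV. P_pol exA (exP T) pol x y * h y)" for x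
      using Tnz p1 by (cases x) (simp_all only: ms pq, simp_all add: p_def[symmetric] h_def h1_def h3_def field_simps)
    ultimately show ?thesis by (intro exI[where x="\<lambda>_. 1/2 + e/2"] exI[where x=h]) blast
  next
    case 3
    have q1: "0 < 1 - q" using 3 q by simp
    define D where "D = 2 * (1 - q) + (1 - q) * (1 - p) * T + (1 - p) * (1 + q)"
    define N where "N = (1 - p) * q * (1 + e) + (1 - q) * (1 + p) / 2 + (1 - q) * (1 - p) * T / 2"
    have D0: "0 < D" unfolding D_def using q1 p q T1
      by (intro add_pos_nonneg mult_nonneg_nonneg) auto
    define c where "c = N / D"
    have cD: "c * D = N" unfolding c_def using D0 by simp
    define h4 where "h4 = (q * (1 + e) - c * (1 + q)) / (1 - q)"
    define h3 where "h3 = h4 - T * (c - 1/2)"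
    define h where "h s = (case s of S1 \<Rightarrow> c - 1/2 | S2 \<Rightarrow> 0 | S3 \<Rightarrow> h3 | S4 \<Rightarrow> h4)" for s
    have h4e: "(1 - q) * h4 = q * (1 + e) - c * (1 + q)" unfolding h4_def using q1 by simp
    have eq1: "c + (c - 1/2) = p/2 + (1 - p) * h3"
    proof -
      have id: "(1 - q) * (2 * c - 1/2 - p/2) - (1 - q) * ((1 - p) * h3) = c * D - N"
        unfolding h3_def D_def N_def using h4e by (simp add: algebra_simps) algebra
      have "(1 - q) * (2 * c - 1/2 - p/2) = (1 - q) * ((1 - p) * h3)" using id cD by simp
      then have "2 * c - 1/2 - p/2 = (1 - p) * h3" using q1 by simp
      then show ?thesis by simp
    qed
    have "(\<Sum>y\<in>UNIV. P_pol exA (exP T) pol x y * c) = c" for x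
      by (rule const_inv[OF st])
    moreover have "c + h x = r_pol exA (exr e) pol x + (\<Sum>y\<in>UNIV. P_pol exA (exP T) pol x y * h y)" for x
    proof (cases x)
      case S1 then show ?thesis unfolding S1 ms using eq1
        by (simp add: p_def[symmetric] h_def algebra_simps)
    next
      case S2 then show ?thesis unfolding S2 ms by (simp add: h_def)
    next
      case S3 then show ?thesis unfolding S3 ms using Tnz
        by (simp add: h_def h3_def field_simps)
    next
      case S4
      have "c + h4 = q * (1/2 + e) + q * ((1 - 1/T) * h4 + 1/T * h3) + (1 - q) * 0"
      proof -
        have "q * ((1 - 1/T) * h4 + 1/T * h3) = q * h4 - q * (c - 1/2)"
          unfolding h3_def using Tnz by (simp add: field_simps)
        then show ?thesis using h4e by (simp add: algebra_simps)
      qed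
      then show ?thesis unfolding S4 ms by (simp add: q_def[symmetric] h_def)
    qed
    ultimately show ?thesis by (intro exI[where x="\<lambda>_. c"] exI[where x=h]) blast
  qed
qed

lemma gain_upper:
  assumes pol: "is_policy exA pol"
  shows "gain exA (exP T) (exr e) pol s \<le> 1/2 + e/2"
proof -
  have st: "stoch (P_pol exA (exP T) pol)" by (rule stoch_ex[OF pol T1])
  obtain g h where inv: "\<And>x. (\<Sum>y\<in>UNIV. P_pol exA (exP T) pol x y * g y) = g x"
    and po: "\<And>x. g x + h x = r_pol exA (exr e) pol x + (\<Sum>y\<in>UNIV. P_pol exA (exP T) pol x y * h y)"
    using poisson_exists[OF pol] by blast
  have "gain exA (exP T) (exr e) pol s = g s" by (rule gain_poisson[OF st inv po])
  also have "g s \<le> 1/2 + e/2" by (rule gain_le[OF st inv po HH_star[OF pol]])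
  finally show ?thesis .
qed

lemma opt_gain_val: "opt_gain exA (exP T) (exr e) s = 1/2 + e/2"
  unfolding opt_gain_def
proof (rule cSup_eq_maximum)
  show "1/2 + e/2 \<in> (\<lambda>pol. gain exA (exP T) (exr e) pol s) ` {pol. is_policy exA pol}"
    using pstar_pol gain_pstar by (intro image_eqI[where x=pstar]) auto
  show "\<And>y. y \<in> (\<lambda>pol. gain exA (exP T) (exr e) pol s) ` {pol. is_policy exA pol} \<Longrightarrow> y \<le> 1/2 + e/2"
    using gain_upper by auto
qed


end

definition dd :: "real \<Rightarrow> real \<Rightarrow> real \<Rightarrow> real" where
  "dd T e \<gamma> = e / (1 - \<gamma> + 2 * \<gamma> / T)"
definition uu :: "real \<Rightarrow> real \<Rightarrow> real" where
  "uu e \<gamma> = (1 + e) / (1 - \<gamma>)"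
definition Vst :: "real \<Rightarrow> real \<Rightarrow> real \<Rightarrow> st \<Rightarrow> real" where
  "Vst T e \<gamma> s = (case s of
      S1 \<Rightarrow> \<gamma> * ((uu e \<gamma> - dd T e \<gamma>) / 2)
    | S2 \<Rightarrow> 1/2 + \<gamma> * (\<gamma> * ((uu e \<gamma> - dd T e \<gamma>) / 2))
    | S3 \<Rightarrow> (uu e \<gamma> - dd T e \<gamma>) / 2
    | S4 \<Rightarrow> (uu e \<gamma> + dd T e \<gamma>) / 2)"
definition gam0 :: "real \<Rightarrow> real \<Rightarrow> real" where
  "gam0 T e = 1 - e / (1 + e + e * T / 2)"

context
  fixes T e :: real
  assumes T1: "T \<ge> 1" and e0: "e > 0"
begin

lemma gam0_bounds: "0 < gam0 T e" "gam0 T e < 1"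
proof -
  have p: "0 < 1 + e + e * T / 2" using e0 T1 by (simp add: add_pos_nonneg)
  have eT: "0 \<le> e * T" using e0 T1 by simp
  have "e / (1 + e + e * T / 2) < 1" using p e0 eT by (simp add: divide_less_eq)
  then show "0 < gam0 T e" unfolding gam0_def by simp
  show "gam0 T e < 1" unfolding gam0_def using p e0 by simp
qed

lemma V_core:
  assumes g0: "gam0 T e < \<gamma>" and g1: "\<gamma> < 1"
  shows "0 < \<gamma>"
    "Vst T e \<gamma> S3 = 1/2 + \<gamma> * ((1 - 1/T) * Vst T e \<gamma> S3 + 1/T * Vst T e \<gamma> S4)"
    "Vst T e \<gamma> S4 = 1/2 + e + \<gamma> * ((1 - 1/T) * Vst T e \<gamma> S4 + 1/T * Vst T e \<gamma> S3)"
    "Vst T e \<gamma> S1 = \<gamma> * Vst T e \<gamma> S3"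
    "Vst T e \<gamma> S2 = 1/2 + \<gamma> * Vst T e \<gamma> S1"
    "1/2 + \<gamma> * Vst T e \<gamma> S2 < Vst T e \<gamma> S1"
    "\<gamma> * Vst T e \<gamma> S2 < Vst T e \<gamma> S4"
proof -
  have Tp: "0 < T" using T1 by simp
  show gp: "0 < \<gamma>" using g0 gam0_bounds(1) by simp
  define a where "a = 1 / T"
  have aT: "a * T = 1" unfolding a_def using Tp by simp
  have a0: "0 < a" unfolding a_def using Tp by simp
  define den where "den = 1 - \<gamma> + 2 * \<gamma> * a"
  have den0: "0 < den" unfolding den_def using g1 gp a0 by (simp add: add_pos_nonneg)
  define d where "d = dd T e \<gamma>"
  define u where "u = uu e \<gamma>"
  have dden: "d * den = e" unfolding d_def dd_def den_def a_def using den0 unfolding den_def a_def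
    by (simp add: field_simps)
  have d0: "0 < d" unfolding d_def dd_def using den0 e0 unfolding den_def a_def by simp
  have uu1: "u * (1 - \<gamma>) = 1 + e" unfolding u_def uu_def using g1 by simp
  define V3 where "V3 = (u - d) / 2"
  define V4 where "V4 = (u + d) / 2"
  have v3: "Vst T e \<gamma> S3 = V3" and v4: "Vst T e \<gamma> S4 = V4"
    and v1: "Vst T e \<gamma> S1 = \<gamma> * V3" and v2: "Vst T e \<gamma> S2 = 1/2 + \<gamma> * (\<gamma> * V3)"
    unfolding Vst_def V3_def V4_def u_def d_def by simp_all
  have id3: "V3 - \<gamma> * ((1 - a) * V3 + a * V4) = (u * (1 - \<gamma>) - d * den) / 2"
    unfolding V3_def V4_def den_def by (simp add: field_simps)
  have id4: "V4 - \<gamma> * ((1 - a) * V4 + a * V3) = (u * (1 - \<gamma>) + d * den) / 2"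
    unfolding V3_def V4_def den_def by (simp add: field_simps)
  show "Vst T e \<gamma> S3 = 1/2 + \<gamma> * ((1 - 1/T) * Vst T e \<gamma> S3 + 1/T * Vst T e \<gamma> S4)"
    using id3 uu1 dden unfolding v3 v4 a_def by simp
  show e4: "Vst T e \<gamma> S4 = 1/2 + e + \<gamma> * ((1 - 1/T) * Vst T e \<gamma> S4 + 1/T * Vst T e \<gamma> S3)"
    using id4 uu1 dden unfolding v3 v4 a_def by simp
  show "Vst T e \<gamma> S1 = \<gamma> * Vst T e \<gamma> S3" unfolding v1 v3 ..
  show "Vst T e \<gamma> S2 = 1/2 + \<gamma> * Vst T e \<gamma> S1" unfolding v1 v2 ..
  have "2 * \<gamma> * a \<le> den" unfolding den_def using g1 by simp
  then have "d * (2 * \<gamma> * a) \<le> e" using dden d0 by (metis mult_left_mono less_imp_le)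
  then have "d * (2 * \<gamma> * a) * T \<le> e * T" using Tp by (simp add: mult_right_mono)
  moreover have "d * (2 * \<gamma> * a) * T = 2 * (\<gamma> * d) * (a * T)" by (simp add: algebra_simps)
  ultimately have gd: "\<gamma> * d \<le> e * T / 2" using aT by simp
  have "(1 - \<gamma>) * (\<gamma> * d) \<le> (1 - \<gamma>) * (e * T / 2)" using gd g1 by (simp add: mult_left_mono)
  moreover have "(1 - \<gamma>) * (1 + e + e * T / 2) < e"
  proof -
    have p: "0 < 1 + e + e * T / 2" using e0 T1 by (simp add: add_pos_nonneg)
    have "1 - \<gamma> < e / (1 + e + e * T / 2)" using g0 unfolding gam0_def by simp
    then show ?thesis using p by (simp add: less_divide_eq)
  qed
  moreover define W3 where "W3 = (1 - \<gamma>) * V3"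
  moreover have "2 * (\<gamma> * W3) = \<gamma> * (1 + e) - (1 - \<gamma>) * (\<gamma> * d)"
  proof -
    have "2 * (\<gamma> * W3) = \<gamma> * (u * (1 - \<gamma>)) - (1 - \<gamma>) * (\<gamma> * d)"
      unfolding W3_def V3_def by (simp add: field_simps)
    then show ?thesis using uu1 by simp
  qed
  moreover have "(1 - \<gamma>) * (1 + e + e * T / 2) = (1 + e) - \<gamma> * (1 + e) + (1 - \<gamma>) * (e * T / 2)"
    by (simp add: algebra_simps)
  ultimately have gW: "1/2 < \<gamma> * W3" by linarith
  have W0: "0 < W3"
  proof (rule ccontr)
    assume "\<not> 0 < W3"
    then have "\<gamma> * W3 \<le> 0" using gp by (simp add: mult_nonneg_nonpos)
    then show False using gW by simp
  qed
  have V30: "0 < V3" using W0 g1 unfolding W3_def by (simp add: zero_less_mult_iff)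
  have "(1 + \<gamma>) * (1/2) < (1 + \<gamma>) * (\<gamma> * W3)" using gW gp by simp
  then show "1/2 + \<gamma> * Vst T e \<gamma> S2 < Vst T e \<gamma> S1"
  proof -
    have A: "(1 + \<gamma>) * (\<gamma> * ((1 - \<gamma>) * V3)) = \<gamma> * V3 - \<gamma> * (\<gamma> * (\<gamma> * V3))"
      by (simp add: algebra_simps)
    have B: "(1 + \<gamma>) * (1/2) = 1/2 + \<gamma> / 2" by (simp add: field_simps)
    have C: "\<gamma> * (1/2 + \<gamma> * (\<gamma> * V3)) = \<gamma> / 2 + \<gamma> * (\<gamma> * (\<gamma> * V3))"
      by (simp add: algebra_simps)
    have X: "(1 + \<gamma>) * (1/2) < (1 + \<gamma>) * (\<gamma> * ((1 - \<gamma>) * V3))"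
      using \<open>(1 + \<gamma>) * (1/2) < (1 + \<gamma>) * (\<gamma> * W3)\<close> unfolding W3_def .
    have "1/2 + \<gamma> * (1/2 + \<gamma> * (\<gamma> * V3)) = (1 + \<gamma>) * (1/2) + \<gamma> * (\<gamma> * (\<gamma> * V3))"
      by (simp add: field_simps)
    also have "\<dots> < (1 + \<gamma>) * (\<gamma> * ((1 - \<gamma>) * V3)) + \<gamma> * (\<gamma> * (\<gamma> * V3))"
      using X by (rule add_strict_right_mono)
    also have "\<dots> = \<gamma> * V3" using A by simp
    finally show ?thesis unfolding v1 v2 .
  qed
  have "\<gamma> * W3 \<le> W3" using W0 g1 by simp
  then have W12: "1/2 < W3" using gW by simp
  have "\<gamma> * (\<gamma> * \<gamma>) \<le> \<gamma>"
  proof -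
    have "\<gamma> * \<gamma> \<le> 1" using gp g1 by (simp add: mult_le_one)
    then show ?thesis using gp by (simp add: mult_le_cancel_left1)
  qed
  then have "\<gamma> * (\<gamma> * \<gamma>) * V3 \<le> \<gamma> * V3" using V30 by (simp add: mult_right_mono)
  then show "\<gamma> * Vst T e \<gamma> S2 < Vst T e \<gamma> S4"
    unfolding v2 v4 V4_def using W12 d0 g1 unfolding W3_def V3_def
    by (simp add: algebra_simps)
qed


lemma Vst_ge:
  assumes pol: "is_policy exA pol" and g0: "gam0 T e < \<gamma>" and g1: "\<gamma> < 1"
  shows "r_pol exA (exr e) pol x + \<gamma> * (\<Sum>y\<in>UNIV. P_pol exA (exP T) pol x y * Vst T e \<gamma> y) \<le> Vst T e \<gamma> x"
proof -
  note ms = MS1p[OF pol] MS2p[OF pol] MS3p[OF pol] MS4p[OF pol] RS1 RS2p[OF pol] RS3p[OF pol] RS4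
  note vc = V_core[OF g0 g1]
  note pf = pol_facts[OF pol]
  define p where "p = pol S1 0"
  define q where "q = pol S4 0"
  have p: "0 \<le> p" and q: "q \<le> 1" using pf by (auto simp: p_def q_def)
  show ?thesis
  proof (cases x)
    case S1
    have "r_pol exA (exr e) pol x + \<gamma> * (\<Sum>y\<in>UNIV. P_pol exA (exP T) pol x y * Vst T e \<gamma> y)
       = Vst T e \<gamma> S1 + p * (1/2 + \<gamma> * Vst T e \<gamma> S2 - Vst T e \<gamma> S1)"
      unfolding S1 ms p_def[symmetric] vc(4) by (simp add: algebra_simps)
    moreover have "p * (1/2 + \<gamma> * Vst T e \<gamma> S2 - Vst T e \<gamma> S1) \<le> 0"
      using p vc(6) by (simp add: mult_nonneg_nonpos)
    ultimately show ?thesis using S1 by simp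
  next
    case S2 then show ?thesis unfolding S2 ms using vc(5) by simp
  next
    case S3 then show ?thesis unfolding S3 ms using vc(2) by simp
  next
    case S4
    have "r_pol exA (exr e) pol x + \<gamma> * (\<Sum>y\<in>UNIV. P_pol exA (exP T) pol x y * Vst T e \<gamma> y)
       = q * (1/2 + e + \<gamma> * ((1 - 1/T) * Vst T e \<gamma> S4 + 1/T * Vst T e \<gamma> S3))
         + (1 - q) * (\<gamma> * Vst T e \<gamma> S2)"
      unfolding S4 ms q_def[symmetric] by (simp add: algebra_simps)
    also have "\<dots> = Vst T e \<gamma> S4 + (1 - q) * (\<gamma> * Vst T e \<gamma> S2 - Vst T e \<gamma> S4)"
      unfolding vc(3)[symmetric] by (simp add: algebra_simps)
    finally have eq: "r_pol exA (exr e) pol x + \<gamma> * (\<Sum>y\<in>UNIV. P_pol exA (exP T) pol x y * Vst T e \<gamma> y)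
       = Vst T e \<gamma> S4 + (1 - q) * (\<gamma> * Vst T e \<gamma> S2 - Vst T e \<gamma> S4)" .
    have "(1 - q) * (\<gamma> * Vst T e \<gamma> S2 - Vst T e \<gamma> S4) \<le> 0"
      using q vc(7) by (simp add: mult_nonneg_nonpos)
    then show ?thesis using eq S4 by simp
  qed
qed

lemma Vst_eq:
  assumes g0: "gam0 T e < \<gamma>" and g1: "\<gamma> < 1"
  shows "Vst T e \<gamma> x = r_pol exA (exr e) pstar x + \<gamma> * (\<Sum>y\<in>UNIV. P_pol exA (exP T) pstar x y * Vst T e \<gamma> y)"
proof -
  note ms = MS1p[OF pstar_pol] MS2p[OF pstar_pol] MS3p[OF pstar_pol] MS4p[OF pstar_pol] RS1 RS2p[OF pstar_pol] RS3p[OF pstar_pol] RS4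
  note vc = V_core[OF g0 g1]
  show ?thesis using vc(2-5) by (cases x) (simp_all only: ms, simp_all add: pstar_def)
qed

lemma disc_pstar:
  assumes g0: "gam0 T e < \<gamma>" and g1: "\<gamma> < 1"
  shows "disc_value exA (exP T) (exr e) pstar \<gamma> x = Vst T e \<gamma> x"
proof -
  have gp: "0 \<le> \<gamma>" using V_core(1)[OF g0 g1] by simp
  have de: "\<And>x. disc_value exA (exP T) (exr e) pstar \<gamma> x = r_pol exA (exr e) pstar x + \<gamma> * (\<Sum>y\<in>UNIV. P_pol exA (exP T) pstar x y * disc_value exA (exP T) (exr e) pstar \<gamma> y)"
    by (rule disc_eq[OF st_star[OF T1 e0] gp g1])
  have ve: "\<And>x. Vst T e \<gamma> x = r_pol exA (exr e) pstar x + \<gamma> * (\<Sum>y\<in>UNIV. P_pol exA (exP T) pstar x y * Vst T e \<gamma> y)"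
    by (rule Vst_eq[OF g0 g1])
  have "disc_value exA (exP T) (exr e) pstar \<gamma> x \<le> Vst T e \<gamma> x"
    by (rule disc_compare[where R="r_pol exA (exr e) pstar", OF st_star[OF T1 e0] gp g1]) (metis de ve order_refl)+
  moreover have "Vst T e \<gamma> x \<le> disc_value exA (exP T) (exr e) pstar \<gamma> x"
    by (rule disc_compare[where R="r_pol exA (exr e) pstar", OF st_star[OF T1 e0] gp g1]) (metis de ve order_refl)+
  ultimately show ?thesis by simp
qed

lemma disc_le:
  assumes pol: "is_policy exA pol" and g0: "gam0 T e < \<gamma>" and g1: "\<gamma> < 1"
  shows "disc_value exA (exP T) (exr e) pol \<gamma> x \<le> Vst T e \<gamma> x"
proof -
  have gp: "0 \<le> \<gamma>" using V_core(1)[OF g0 g1] by simp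
  have st: "stoch (P_pol exA (exP T) pol)" by (rule stoch_ex[OF pol T1])
  have de: "\<And>x. disc_value exA (exP T) (exr e) pol \<gamma> x = r_pol exA (exr e) pol x + \<gamma> * (\<Sum>y\<in>UNIV. P_pol exA (exP T) pol x y * disc_value exA (exP T) (exr e) pol \<gamma> y)"
    by (rule disc_eq[OF st gp g1])
  show ?thesis
    by (rule disc_compare[where R="r_pol exA (exr e) pol", OF st gp g1])
      (rule Vst_ge[OF pol g0 g1], metis de order_refl)
qed

lemma blackwell_pstar: "blackwell_optimal exA (exP T) (exr e) pstar"
  unfolding blackwell_optimal_def
proof (intro conjI exI[where x="gam0 T e"])
  show "is_policy exA pstar" by (rule pstar_pol)
  show "gam0 T e < 1" by (rule gam0_bounds(2))
  show "\<forall>\<gamma>. gam0 T e < \<gamma> \<and> \<gamma> < 1 \<longrightarrow> (\<forall>pol'. is_policy exA pol' \<longrightarrow>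
      (\<forall>s. disc_value exA (exP T) (exr e) pol' \<gamma> s \<le> disc_value exA (exP T) (exr e) pstar \<gamma> s))"
    using disc_le disc_pstar by auto
qed

lemma blackwell_unique:
  assumes bo: "blackwell_optimal exA (exP T) (exr e) pol"
  shows "pol = pstar"
proof -
  have pol: "is_policy exA pol" using bo unfolding blackwell_optimal_def by auto
  obtain \<gamma>1 where g1: "\<gamma>1 < 1" and opt: "\<And>\<gamma>. \<gamma>1 < \<gamma> \<Longrightarrow> \<gamma> < 1 \<Longrightarrow> (\<forall>pol'. is_policy exA pol' \<longrightarrow>
        (\<forall>s. disc_value exA (exP T) (exr e) pol' \<gamma> s \<le> disc_value exA (exP T) (exr e) pol \<gamma> s))"
    using bo unfolding blackwell_optimal_def by blast
  define \<gamma> where "\<gamma> = (max \<gamma>1 (gam0 T e) + 1) / 2"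
  have gg: "gam0 T e < \<gamma>" "\<gamma>1 < \<gamma>" "\<gamma> < 1" using g1 gam0_bounds(2) unfolding \<gamma>_def by auto
  have gp: "0 \<le> \<gamma>" using V_core(1)[OF gg(1) gg(3)] by simp
  have st: "stoch (P_pol exA (exP T) pol)" by (rule stoch_ex[OF pol T1])
  have eqV: "disc_value exA (exP T) (exr e) pol \<gamma> x = Vst T e \<gamma> x" for x
  proof -
    have "disc_value exA (exP T) (exr e) pstar \<gamma> x \<le> disc_value exA (exP T) (exr e) pol \<gamma> x"
      using opt[OF gg(2) gg(3)] pstar_pol by auto
    then show ?thesis using disc_le[OF pol gg(1) gg(3), where x=x] disc_pstar[OF gg(1) gg(3), where x=x] by linarith
  qed
  have VV: "Vst T e \<gamma> x = r_pol exA (exr e) pol x + \<gamma> * (\<Sum>y\<in>UNIV. P_pol exA (exP T) pol x y * Vst T e \<gamma> y)" for x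
    using disc_eq[OF st gp gg(3), where r="exr e" and s=x] unfolding eqV .
  note ms = MS1p[OF pol] MS2p[OF pol] MS3p[OF pol] MS4p[OF pol] RS1 RS2p[OF pol] RS3p[OF pol] RS4
  note vc = V_core[OF gg(1) gg(3)]
  note pf = pol_facts[OF pol]
  define p where "p = pol S1 0"
  define q where "q = pol S4 0"
  have "Vst T e \<gamma> S1 = Vst T e \<gamma> S1 + p * (1/2 + \<gamma> * Vst T e \<gamma> S2 - Vst T e \<gamma> S1)"
    using VV[of S1] unfolding ms p_def[symmetric] vc(4) by (simp add: algebra_simps)
  then have "p * (1/2 + \<gamma> * Vst T e \<gamma> S2 - Vst T e \<gamma> S1) = 0" by simp
  then have p0: "p = 0" using vc(6) by simp
  have "Vst T e \<gamma> S4 = q * (1/2 + e + \<gamma> * ((1 - 1/T) * Vst T e \<gamma> S4 + 1/T * Vst T e \<gamma> S3))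
         + (1 - q) * (\<gamma> * Vst T e \<gamma> S2)"
    using VV[of S4] unfolding ms q_def[symmetric] by (simp add: algebra_simps)
  also have "\<dots> = Vst T e \<gamma> S4 + (1 - q) * (\<gamma> * Vst T e \<gamma> S2 - Vst T e \<gamma> S4)"
    unfolding vc(3)[symmetric] by (simp add: algebra_simps)
  finally have "(1 - q) * (\<gamma> * Vst T e \<gamma> S2 - Vst T e \<gamma> S4) = 0" by simp
  then have q1: "q = 1" using vc(7) by simp
  have out: "a \<notin> exA s \<Longrightarrow> pol s a = 0" for s a using pol unfolding is_policy_def by auto
  show ?thesis
  proof (intro ext)
    fix s a
    show "pol s a = pstar s a"
    proof (cases s)
      case S1
      then show ?thesis using p0 pf(1) out[of a S1] unfolding p_def pstar_def
        by (cases "a = 0"; cases "a = 1") auto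
    next
      case S2
      then show ?thesis using pf(2) out[of a S2] unfolding pstar_def by (cases "a = 0") auto
    next
      case S3
      then show ?thesis using pf(3) out[of a S3] unfolding pstar_def by (cases "a = 0") auto
    next
      case S4
      then show ?thesis using q1 pf(4) out[of a S4] unfolding q_def pstar_def
        by (cases "a = 0"; cases "a = 1") auto
    qed
  qed
qed

end

theorem theorem28:
  fixes T \<epsilon> :: real
  assumes "T \<ge> 1" and "\<epsilon> > 0"
  shows "(\<exists>pol. blackwell_optimal exA (exP T) (exr \<epsilon>) pol)
    \<and> (\<forall>pol. blackwell_optimal exA (exP T) (exr \<epsilon>) pol \<longrightarrow>
          span (bias exA (exP T) (exr \<epsilon>) pol) = \<epsilon> * T / 2 + \<epsilon> + 1 / 2)
    \<and> (\<exists>pol. is_policy exA pol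
          \<and> (\<exists>c. \<forall>s. gain exA (exP T) (exr \<epsilon>) pol s = c)
          \<and> (\<forall>s. gain exA (exP T) (exr \<epsilon>) pol s = opt_gain exA (exP T) (exr \<epsilon>) s - \<epsilon> / 2)
          \<and> span (bias exA (exP T) (exr \<epsilon>) pol) = 1 / 2)"
proof (intro conjI)
  show "\<exists>pol. blackwell_optimal exA (exP T) (exr \<epsilon>) pol"
    using blackwell_pstar[OF assms] by blast
  show "\<forall>pol. blackwell_optimal exA (exP T) (exr \<epsilon>) pol \<longrightarrow>
          span (bias exA (exP T) (exr \<epsilon>) pol) = \<epsilon> * T / 2 + \<epsilon> + 1 / 2"
  proof (intro allI impI)
    fix pol assume "blackwell_optimal exA (exP T) (exr \<epsilon>) pol"
    then have "pol = pstar" by (rule blackwell_unique[OF assms])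
    moreover have "bias exA (exP T) (exr \<epsilon>) pstar = hstar T \<epsilon>"
      using bias_pstar[OF assms] by (intro ext) simp
    ultimately show "span (bias exA (exP T) (exr \<epsilon>) pol) = \<epsilon> * T / 2 + \<epsilon> + 1 / 2"
      using span_hstar[OF assms] by simp
  qed
  show "\<exists>pol. is_policy exA pol
          \<and> (\<exists>c. \<forall>s. gain exA (exP T) (exr \<epsilon>) pol s = c)
          \<and> (\<forall>s. gain exA (exP T) (exr \<epsilon>) pol s = opt_gain exA (exP T) (exr \<epsilon>) s - \<epsilon> / 2)
          \<and> span (bias exA (exP T) (exr \<epsilon>) pol) = 1 / 2"
  proof (intro exI[where x=pzero] conjI)
    show "is_policy exA pzero" by (rule pzero_pol)
    show "\<exists>c. \<forall>s. gain exA (exP T) (exr \<epsilon>) pzero s = c"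
      using gain_pzero[OF assms] by blast
    show "\<forall>s. gain exA (exP T) (exr \<epsilon>) pzero s = opt_gain exA (exP T) (exr \<epsilon>) s - \<epsilon> / 2"
      using gain_pzero[OF assms] opt_gain_val[OF assms] by simp
    have "bias exA (exP T) (exr \<epsilon>) pzero = hzero"
      using bias_pzero[OF assms] by (intro ext) simp
    then show "span (bias exA (exP T) (exr \<epsilon>) pzero) = 1 / 2" using span_hzero[OF assms] by simp
  qed
qed

end
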